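(* Let $\mathcal{E}$ be a finite-dimensional Euclidean space, $e\in\mathcal{E}$ nonzero, and let $C$ be a compact convex set contained in the hyperplane $H=\{x\in\mathcal{E}: \langle e,x\rangle=1\}$. If $C$ is amenable, then its conic hull $\mathcal{K}=\operatorname{cone}C=\{\lambda x: x\in C,\lambda\ge0\}$ is also amenable.
   Context: A face of a closed convex set $C$ is a closed convex subset $F\subseteq C$ such that whenever $x,y\in C$ and $\alpha x+(1-\alpha)y\in F$ for some $\alpha\in(0,1)$, then $x,y\in F$. A face $F$ of a closed convex set $C$ is amenable if for every bounded set $B$ there exists $\kappa>0$ such that $\operatorname{dist}(x,F)\le\kappa\operatorname{dist}(x,C)$ for all $x\in(\operatorname{aff}F)\cap B$; $C$ is amenable if all its faces are amenable. For a closed convex cone $\mathcal{K}$ this is equivalent to: for every face $\mathcal{F}$ there is $\kappa>0$ with $\operatorname{dist}(x,\mathcal{F})\le\kappa\operatorname{dist}(x,\mathcal{K})$ for all $x\in\operatorname{span}\mathcal{F}$. *)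

theory Defs
  imports "HOL-Analysis.Analysis"
begin

text \<open>The library notion face_of captures everything except closedness, which we add.\<close>
definition is_face :: "'a::euclidean_space set \<Rightarrow> 'a set \<Rightarrow> bool" where
  "is_face F C \<longleftrightarrow> closed F \<and> convex F \<and> F \<subseteq> C \<and>
     (\<forall>x\<in>C. \<forall>y\<in>C. \<forall>\<alpha>::real. 0 < \<alpha> \<and> \<alpha> < 1 \<and> \<alpha> *\<^sub>R x + (1 - \<alpha>) *\<^sub>R y \<in> F
        \<longrightarrow> x \<in> F \<and> y \<in> F)"

definition amenable_face :: "'a::euclidean_space set \<Rightarrow> 'a set \<Rightarrow> bool" where
  "amenable_face F C \<longleftrightarrow>
     (\<forall>B. bounded B \<longrightarrow>
        (\<exists>\<kappa>>0. \<forall>x \<in> affine hull F \<inter> B. infdist x F \<le> \<kappa> * infdist x C))"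

definition amenable :: "'a::euclidean_space set \<Rightarrow> bool" where
  "amenable C \<longleftrightarrow> (\<forall>F. is_face F C \<longrightarrow> amenable_face F C)"

definition conic_hull :: "'a::real_vector set \<Rightarrow> 'a set" where
  "conic_hull C = {t *\<^sub>R x | t x. x \<in> C \<and> (0::real) \<le> t}"

end

theory Submission
  imports Defs
begin

lemma infdist_geI:
  assumes "A \<noteq> {}" "\<And>y. y \<in> A \<Longrightarrow> a \<le> dist x y"
  shows "a \<le> infdist x A"
  using assms unfolding infdist_def by (auto intro: cINF_greatest)

lemma face_scale:
  fixes K :: "'a::euclidean_space set"
  assumes cone: "\<And>y t. y \<in> K \<Longrightarrow> 0 \<le> t \<Longrightarrow> t *\<^sub>R y \<in> K"
    and F: "is_face F K" and g: "g \<in> F" and t: "0 \<le> t"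
  shows "t *\<^sub>R g \<in> F"
proof -
  have ext: "\<And>x y \<alpha>. x \<in> K \<Longrightarrow> y \<in> K \<Longrightarrow> 0 < \<alpha> \<Longrightarrow> \<alpha> < 1 \<Longrightarrow>
      \<alpha> *\<^sub>R x + (1 - \<alpha>) *\<^sub>R y \<in> F \<Longrightarrow> x \<in> F \<and> y \<in> F"
    using F unfolding is_face_def by blast
  have gK: "g \<in> K" using F g unfolding is_face_def by blast
  consider "t < 1" | "t = 1" | "t > 1" by linarith
  then show ?thesis
  proof cases
    case 1
    have "(1/2) *\<^sub>R (t *\<^sub>R g) + (1 - 1/2) *\<^sub>R ((2 - t) *\<^sub>R g) = g"
      by (simp add: scaleR_add_left[symmetric] algebra_simps)
    then show ?thesis using ext[of "t *\<^sub>R g" "(2 - t) *\<^sub>R g" "1/2"] cone gK g t 1 by auto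
  next
    case 2 then show ?thesis using g by simp
  next
    case 3
    have "(1/t) *\<^sub>R (t *\<^sub>R g) + (1 - 1/t) *\<^sub>R 0 = g" using 3 by simp
    then show ?thesis using ext[of "t *\<^sub>R g" 0 "1/t"] cone[OF gK, of t] cone[OF gK, of 0] g t 3
      by auto
  qed
qed

lemma span_hyp_affine:
  fixes e :: "'a::euclidean_space"
  assumes G: "G \<subseteq> {x. e \<bullet> x = 1}" and g0: "g0 \<in> G"
    and z: "z \<in> span G" and ez: "e \<bullet> z = 1"
  shows "z \<in> affine hull G"
proof -
  define D where "D = (\<lambda>g. g - g0) ` G"
  have "G \<subseteq> span (insert g0 D)"
  proof
    fix g assume "g \<in> G"
    then have "g - g0 \<in> span (insert g0 D)" "g0 \<in> span (insert g0 D)"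
      unfolding D_def by (auto intro: span_base)
    then have "(g - g0) + g0 \<in> span (insert g0 D)" by (rule span_add)
    then show "g \<in> span (insert g0 D)" by simp
  qed
  then have "span G \<subseteq> span (insert g0 D)" by (simp add: span_minimal)
  with z obtain k where k: "z - k *\<^sub>R g0 \<in> span D" by (auto simp: span_insert)
  have "D \<subseteq> {w. e \<bullet> w = 0}" using G g0 unfolding D_def by (auto simp: inner_diff_right subset_iff)
  then have "span D \<subseteq> {w. e \<bullet> w = 0}" by (simp add: span_minimal subspace_hyperplane)
  with k have "e \<bullet> (z - k *\<^sub>R g0) = 0" by auto
  then have "k = 1" using ez G g0 by (auto simp: inner_diff_right)
  with k have w: "z - g0 \<in> span D" by simp
  have "affine hull G = (+) g0 ` span ((\<lambda>x. x - g0) ` G)"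
    using affine_hull_insert_span_gen[of g0 G] g0 by (simp add: insert_absorb)
  then show ?thesis using w unfolding D_def by (auto intro!: image_eqI[of _ _ "z - g0"])
qed

theorem theorem4p5:
  fixes e :: "'a::euclidean_space" and C :: "'a set"
  assumes "e \<noteq> 0"
    and "compact C" and "convex C"
    and "C \<subseteq> {x. e \<bullet> x = 1}"
    and "amenable C"
  shows "amenable (conic_hull C)"
  (is "amenable ?K")
proof -
  note e = assms(1) and Cc = assms(2) and Cv = assms(3) and CH = assms(4) and am = assms(5)
  have Kdef: "\<And>y. y \<in> ?K \<longleftrightarrow> (\<exists>s c. y = s *\<^sub>R c \<and> c \<in> C \<and> 0 \<le> s)"
    unfolding conic_hull_def by blast
  have cone: "\<And>y t. y \<in> ?K \<Longrightarrow> 0 \<le> t \<Longrightarrow> t *\<^sub>R y \<in> ?K"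
  proof -
    fix y and t :: real assume "y \<in> ?K" "0 \<le> t"
    then obtain s c where "y = s *\<^sub>R c" "c \<in> C" "0 \<le> s" using Kdef by blast
    then show "t *\<^sub>R y \<in> ?K" using \<open>0 \<le> t\<close> Kdef[of "t *\<^sub>R y"]
      by (auto intro!: exI[of _ "t * s"] exI[of _ c])
  qed
  have CK: "C \<subseteq> ?K" using Kdef by (metis scaleR_one subsetI zero_le_one)
  obtain M where M: "M > 0" "\<And>c. c \<in> C \<Longrightarrow> norm c \<le> M"
    using compact_imp_bounded[OF Cc] by (auto simp: bounded_pos)
  define L where "L = 2 * M"
  have pos1: "1 + norm e * M > 0" "1 + M * norm e > 0" using M(1)
    by (simp_all add: add_pos_nonneg)
  show ?thesis unfolding amenable_def
  proof (intro allI impI)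
    fix F assume F: "is_face F ?K"
    have FK: "F \<subseteq> ?K" using F unfolding is_face_def by blast
    show "amenable_face F ?K"
    proof (cases "F \<subseteq> {0}")
      case True
      show ?thesis unfolding amenable_face_def
      proof (intro allI impI exI[of _ 1] conjI ballI)
        fix B and x assume "x \<in> affine hull F \<inter> B"
        then have "x \<in> affine hull {0}" using True hull_mono by blast
        then have "x = 0" by simp
        moreover have "F = {} \<or> F = {0}" using True by blast
        moreover have "infdist 0 ({}::'a set) = 0" by (simp add: infdist_def)
        ultimately show "infdist x F \<le> 1 * infdist x ?K"
          using infdist_nonneg[of x ?K] by auto
      qed simp
    next
      case False
      then obtain v where v: "v \<in> F" "v \<noteq> 0" by blast
      define G where "G = F \<inter> C"
      have Gface: "is_face G C"
        using F Cc Cv CK unfolding is_face_def G_def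
        by (auto intro!: closed_Int convex_Int compact_imp_closed) blast+
      then have amG: "amenable_face G C" using am unfolding amenable_def by blast
      obtain \<kappa> where k: "\<kappa> > 0" "\<And>z. z \<in> affine hull G \<inter> cball 0 L \<Longrightarrow> infdist z G \<le> \<kappa> * infdist z C"
        using amG unfolding amenable_face_def by (meson bounded_cball)
      have F_G: "\<exists>s g. w = s *\<^sub>R g \<and> g \<in> G \<and> 0 \<le> s" if "w \<in> F" for w
      proof -
        obtain s c where sc: "w = s *\<^sub>R c" "c \<in> C" "0 \<le> s" using Kdef FK \<open>w \<in> F\<close> by blast
        show ?thesis
        proof (cases "s = 0")
          case True
          have "v \<in> ?K" using FK v by blast
          then obtain s' c' where "v = s' *\<^sub>R c'" "c' \<in> C" "0 \<le> s'" using Kdef by blast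
          then have "s' > 0" using v by auto
          then have "(1/s') *\<^sub>R v = c'" using \<open>v = s' *\<^sub>R c'\<close> by simp
          then have "c' \<in> F" using face_scale[OF cone F v(1), of "1/s'"] \<open>s' > 0\<close> by simp
          then show ?thesis using True sc \<open>c' \<in> C\<close> unfolding G_def by auto
        next
          case False
          then have "(1/s) *\<^sub>R w = c" using sc by simp
          then have "c \<in> F" using face_scale[OF cone F \<open>w \<in> F\<close>, of "1/s"] sc by simp
          then show ?thesis using sc unfolding G_def by auto
        qed
      qed
      obtain g0 where g0: "g0 \<in> G" using F_G[OF v(1)] by blast
      have Gcomp: "compact G" using Gface Cc unfolding is_face_def
        by (metis compact_Int_closed G_def inf.absorb_iff2)
      have GH: "G \<subseteq> {x. e \<bullet> x = 1}" using CH unfolding G_def by blast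
      have affF: "affine hull F \<subseteq> span G"
      proof -
        have "F \<subseteq> span G"
        proof
          fix w assume "w \<in> F"
          then obtain s g where "w = s *\<^sub>R g" "g \<in> G" using F_G by blast
          then show "w \<in> span G" by (simp add: span_base span_mul)
        qed
        then have "span F \<subseteq> span G" by (simp add: span_minimal)
        then show ?thesis using affine_hull_subset_span by blast
      qed
      have zero_F: "0 \<in> F" using face_scale[OF cone F v(1), of 0] by simp
      have hypest: "infdist z C \<le> (1 + norm e * M) * infdist z ?K" if ez: "e \<bullet> z = 1" for z
      proof -
        have "infdist z C / (1 + norm e * M) \<le> infdist z ?K"
        proof (rule infdist_geI)
          show "?K \<noteq> {}" using CK g0 G_def by blast
          fix y assume "y \<in> ?K"
          then obtain s c where sc: "y = s *\<^sub>R c" "c \<in> C" "0 \<le> s" using Kdef by blast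
          have ec: "e \<bullet> c = 1" using CH sc by blast
          have "\<bar>1 - s\<bar> = \<bar>e \<bullet> (z - y)\<bar>" using ez ec sc by (simp add: inner_diff_right)
          also have "\<dots> \<le> norm e * dist z y" using Cauchy_Schwarz_ineq2 by (simp add: dist_norm)
          finally have s1: "\<bar>1 - s\<bar> \<le> norm e * dist z y" .
          have "infdist z C \<le> dist z c" using sc by (simp add: infdist_le)
          also have "\<dots> \<le> dist z y + dist y c" by (rule dist_triangle)
          also have "dist y c = \<bar>s - 1\<bar> * norm c"
          proof -
            have "y - c = (s - 1) *\<^sub>R c" using sc by (simp add: algebra_simps)
            then show ?thesis by (simp add: dist_norm)
          qed
          also have "\<dots> \<le> norm e * dist z y * M"
            using s1 M(2)[OF sc(2)] by (intro mult_mono) (auto simp: abs_minus_commute)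
          finally have "infdist z C \<le> (1 + norm e * M) * dist z y" by (simp add: algebra_simps)
          then show "infdist z C / (1 + norm e * M) \<le> dist z y"
            using pos1 by (simp add: pos_divide_le_eq mult.commute)
        qed
        then show ?thesis using pos1 by (simp add: pos_divide_le_eq mult.commute)
      qed
      define \<kappa>' where "\<kappa>' = max (\<kappa> * (1 + norm e * M)) (2 * (1 + M * norm e))"
      have k'pos: "\<kappa>' > 0" unfolding \<kappa>'_def using pos1 k(1) by (simp add: less_max_iff_disj)
      show ?thesis unfolding amenable_face_def
      proof (intro allI impI exI[of _ \<kappa>'] conjI ballI k'pos)
        fix B x assume "x \<in> affine hull F \<inter> B"
        then have xF: "x \<in> affine hull F" by blast
        define t where "t = e \<bullet> x"
        show "infdist x F \<le> \<kappa>' * infdist x ?K"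
        proof (cases "t * L \<le> norm x")
          case True
          have "norm x / (2 * (1 + M * norm e)) \<le> infdist x ?K"
          proof (rule infdist_geI)
            show "?K \<noteq> {}" using CK g0 G_def by blast
            fix y assume "y \<in> ?K"
            then obtain s c where sc: "y = s *\<^sub>R c" "c \<in> C" "0 \<le> s" using Kdef by blast
            have ec: "e \<bullet> c = 1" using CH sc by blast
            have ey: "e \<bullet> y = s" using sc ec by simp
            have "\<bar>t - s\<bar> = \<bar>e \<bullet> (x - y)\<bar>" using ey t_def by (simp add: inner_diff_right)
            also have "\<dots> \<le> norm e * dist x y" using Cauchy_Schwarz_ineq2 by (simp add: dist_norm)
            finally have s1: "s \<le> t + norm e * dist x y" by linarith
            have ny: "norm y \<le> s * M" using sc M(2)[OF sc(2)] by (simp add: mult_left_mono)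
            have "norm x \<le> norm y + dist x y" by (metis dist_norm norm_triangle_sub add.commute)
            also have "\<dots> \<le> s * M + dist x y" using ny by simp
            also have "\<dots> \<le> (t + norm e * dist x y) * M + dist x y"
              using s1 M(1) by (simp add: mult_right_mono)
            finally have "norm x \<le> t * M + M * norm e * dist x y + dist x y"
              by (simp add: algebra_simps)
            moreover have "t * M \<le> norm x / 2" using True unfolding L_def by simp
            ultimately have "norm x \<le> 2 * (1 + M * norm e) * dist x y" by (simp add: algebra_simps)
            then show "norm x / (2 * (1 + M * norm e)) \<le> dist x y"
              using pos1 by (simp add: pos_divide_le_eq mult.commute)
          qed
          then have "norm x \<le> 2 * (1 + M * norm e) * infdist x ?K"
            using pos1 by (simp add: pos_divide_le_eq mult.commute)
          moreover have "infdist x F \<le> norm x" using infdist_le[OF zero_F, of x] by simp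
          moreover have "2 * (1 + M * norm e) * infdist x ?K \<le> \<kappa>' * infdist x ?K"
            unfolding \<kappa>'_def by (intro mult_right_mono infdist_nonneg) simp
          ultimately show ?thesis by linarith
        next
          case False
          then have tpos: "t > 0" using M(1) unfolding L_def
            by (smt (verit) mult_nonpos_nonneg norm_ge_zero)
          define z where "z = (1/t) *\<^sub>R x"
          have ez: "e \<bullet> z = 1" using tpos unfolding z_def t_def by simp
          have zspan: "z \<in> span G" using affF xF unfolding z_def by (auto intro: span_mul)
          have zaff: "z \<in> affine hull G" using span_hyp_affine[OF GH g0 zspan ez] .
          have "norm z \<le> L" using False tpos unfolding z_def
            by (simp add: divide_le_eq mult.commute)
          then have zb: "z \<in> cball 0 L" by simp
          have x_eq: "x = t *\<^sub>R z" using tpos unfolding z_def by simp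
          obtain g where g: "g \<in> G" "infdist z G = dist z g"
            using infdist_attains_inf[OF compact_imp_closed[OF Gcomp]] g0 by blast
          have tgF: "t *\<^sub>R g \<in> F" using face_scale[OF cone F, of g t] g tpos G_def by auto
          have "infdist x F \<le> dist x (t *\<^sub>R g)" using tgF by (rule infdist_le)
          also have "\<dots> = t * dist z g"
            using tpos by (simp add: x_eq dist_norm scaleR_diff_right[symmetric])
          also have "\<dots> = t * infdist z G" using g by simp
          also have "\<dots> \<le> t * (\<kappa> * infdist z C)"
            using k(2)[of z] zaff zb tpos by (simp add: mult_left_mono)
          also have "\<dots> \<le> t * (\<kappa> * ((1 + norm e * M) * infdist z ?K))"
            using hypest[OF ez] tpos k(1) by (simp add: mult_left_mono)
          also have "\<dots> = (\<kappa> * (1 + norm e * M)) * (t * infdist z ?K)" by (simp add: algebra_simps)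
          also have "t * infdist z ?K \<le> infdist x ?K"
          proof -
            show ?thesis
            proof (rule infdist_geI)
              show "?K \<noteq> {}" using CK g0 G_def by blast
            next
              fix y assume "y \<in> ?K"
              then have "(1/t) *\<^sub>R y \<in> ?K" using cone tpos by simp
              then have "infdist z ?K \<le> dist z ((1/t) *\<^sub>R y)" by (rule infdist_le)
              also have "\<dots> = dist x y / t" using tpos
                by (simp add: z_def dist_norm scaleR_diff_right[symmetric])
              finally show "t * infdist z ?K \<le> dist x y" using tpos
                by (simp add: le_divide_eq mult.commute)
            qed
          qed
          then have "(\<kappa> * (1 + norm e * M)) * (t * infdist z ?K) \<le> \<kappa>' * infdist x ?K"
            using k'pos tpos infdist_nonneg[of z ?K] unfolding \<kappa>'_def
            by (intro mult_mono) auto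
          finally show ?thesis .
        qed
      qed
    qed
  qed
qed

end
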